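(* Let $(M,g)$ be a four-dimensional spacetime with signature $(+,-,-,-)$ and let $X_{abcd}$ be an arbitrary $(2,2)$ double form at a point. Decompose $X=\sum_{i=1}^{6}{}^{(i)}X$ as follows: $S_{abcd}=\tfrac12(X_{abcd}+X_{cdab})$, $A_{abcd}=\tfrac12(X_{abcd}-X_{cdab})$; ${}^{(4)}X_{abcd}=\tfrac1{24}\sum_{\pi}\mathrm{sgn}(\pi)X_{\pi(abcd)}$ (total antisymmetrization over the four indices); ${}^{(c)}X=S-{}^{(4)}X$; with $X_{ac}=g^{bd}X_{abcd}$, $X=g^{ac}X_{ac}$, ${}^{(3)}X_{abcd}=\tfrac{X}{12}(g_{ac}g_{bd}-g_{ad}g_{bc})$; with $h_{ab}$ the traceless part $h_{ab}=c_{ab}-\tfrac14 c\,g_{ab}$ of the first trace $c_{ab}=g^{bd}\,{}^{(c)}X_{abcd}$, ${}^{(2)}X_{abcd}=\tfrac12(g_{ac}h_{bd}-g_{ad}h_{bc}+g_{bd}h_{ac}-g_{bc}h_{ad})$; ${}^{(1)}X={}^{(c)}X-{}^{(2)}X-{}^{(3)}X$; with $k_{ac}=g^{bd}A_{abcd}$, ${}^{(6)}X_{abcd}=\tfrac12(g_{ac}k_{bd}-g_{ad}k_{bc}+g_{bd}k_{ac}-g_{bc}k_{ad})$; ${}^{(5)}X=A-{}^{(6)}X$. Then, with $\overleftrightarrow{\star}Y_{abcd}=\tfrac14\varepsilon_{ab}{}^{pq}\varepsilon_{cd}{}^{rs}Y_{pqrs}$, $$\overleftrightarrow{\star}\,{}^{(1)}X=-{}^{(1)}X,\quad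 \overleftrightarrow{\star}\,{}^{(2)}X=+{}^{(2)}X,\quad \overleftrightarrow{\star}\,{}^{(3)}X=-{}^{(3)}X,$$ $$\overleftrightarrow{\star}\,{}^{(4)}X=-{}^{(4)}X,\quad \overleftrightarrow{\star}\,{}^{(5)}X=+{}^{(5)}X,\quad \overleftrightarrow{\star}\,{}^{(6)}X=-{}^{(6)}X.$$
   Context: A $(2,2)$ double form is a covariant 4-tensor with $X_{abcd}=-X_{bacd}=-X_{abdc}$. The Levi-Civita tensors are $\varepsilon_{abcd}=\sqrt{-\det g}\,[abcd]$, $\varepsilon^{abcd}=-[abcd]/\sqrt{-\det g}$ with $[0123]=+1$, so that $\varepsilon^{a_1\dots a_4}\varepsilon_{b_1\dots b_4}=-\delta^{a_1\dots a_4}_{b_1\dots b_4}$ (generalized Kronecker delta). The pieces ${}^{(i)}X$ are the six irreducible components of $X$ under the pseudo-orthogonal group: ${}^{(1)}X$ is symmetric, satisfies the cyclic identity and is traceless; ${}^{(2)}X,{}^{(3)}X$ are Kulkarni–Nomizu products of the metric with the traceless first trace and with a multiple of the metric; ${}^{(4)}X$ is a 4-form; ${}^{(5)}X$ is antisymmetric (under $ab\leftrightarrow cd$) and traceless; ${}^{(6)}X$ is the antisymmetric Kulkarni–Nomizu piece. *)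

theory Defs
  imports "HOL-Analysis.Analysis"
begin

text \<open>Tensors at a point of a 4-dimensional spacetime, components w.r.t. an
arbitrary basis; indices range over the 4-element type 4 (values 0,1,2,3).\<close>

type_synonym tensor4 = "4 \<Rightarrow> 4 \<Rightarrow> 4 \<Rightarrow> 4 \<Rightarrow> real"
type_synonym tensor2 = "4 \<Rightarrow> 4 \<Rightarrow> real"

definition minkowski :: "real^4^4" where
  "minkowski = (\<chi> i j. if i = j then (if i = 0 then 1 else -1) else 0)"

definition lorentzian :: "real^4^4 \<Rightarrow> bool" where
  "lorentzian g \<longleftrightarrow> transpose g = g \<and>
     (\<exists>P::real^4^4. invertible P \<and> transpose P ** g ** P = minkowski)"

definition double_form :: "tensor4 \<Rightarrow> bool" where
  "double_form X \<longleftrightarrow> (\<forall>a b c d. X a b c d = - X b a c d \<and> X a b c d = - X a b d c)"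

definition slots :: "4 \<Rightarrow> 4 \<Rightarrow> 4 \<Rightarrow> 4 \<Rightarrow> 4 \<Rightarrow> 4" where
  "slots a b c d = (\<lambda>i. if i = 0 then a else if i = 1 then b else if i = 2 then c else d)"

definition levi_symbol :: "4 \<Rightarrow> 4 \<Rightarrow> 4 \<Rightarrow> 4 \<Rightarrow> real" where
  "levi_symbol a b c d = (if bij (slots a b c d) then of_int (sign (slots a b c d)) else 0)"

definition ginv :: "real^4^4 \<Rightarrow> tensor2" where
  "ginv g a b = matrix_inv g $ a $ b"

definition eps_low :: "real^4^4 \<Rightarrow> tensor4" where
  "eps_low g a b c d = sqrt (- det g) * levi_symbol a b c d"

definition eps_mixed :: "real^4^4 \<Rightarrow> tensor4" where
  "eps_mixed g a b p q = (\<Sum>r\<in>UNIV. \<Sum>s\<in>UNIV. eps_low g a b r s * ginv g r p * ginv g s q)"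

definition double_dual :: "real^4^4 \<Rightarrow> tensor4 \<Rightarrow> tensor4" where
  "double_dual g Y a b c d = (1/4) * (\<Sum>p\<in>UNIV. \<Sum>q\<in>UNIV. \<Sum>r\<in>UNIV. \<Sum>s\<in>UNIV.
      eps_mixed g a b p q * eps_mixed g c d r s * Y p q r s)"

definition sym_part :: "tensor4 \<Rightarrow> tensor4" where
  "sym_part X a b c d = (1/2) * (X a b c d + X c d a b)"

definition antisym_part :: "tensor4 \<Rightarrow> tensor4" where
  "antisym_part X a b c d = (1/2) * (X a b c d - X c d a b)"

definition trace1 :: "real^4^4 \<Rightarrow> tensor4 \<Rightarrow> tensor2" where
  "trace1 g X a c = (\<Sum>b\<in>UNIV. \<Sum>d\<in>UNIV. ginv g b d * X a b c d)"

definition trace2 :: "real^4^4 \<Rightarrow> tensor2 \<Rightarrow> real" where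
  "trace2 g T = (\<Sum>a\<in>UNIV. \<Sum>c\<in>UNIV. ginv g a c * T a c)"

definition kn :: "real^4^4 \<Rightarrow> tensor2 \<Rightarrow> tensor4" where
  "kn g h a b c d = (1/2) * (g$a$c * h b d - g$a$d * h b c + g$b$d * h a c - g$b$c * h a d)"

definition piece4 :: "tensor4 \<Rightarrow> tensor4" where
  "piece4 X a b c d = (1/24) * (\<Sum>\<pi>\<in>{\<pi>. \<pi> permutes (UNIV :: 4 set)}.
      of_int (sign \<pi>) * X (slots a b c d (\<pi> 0)) (slots a b c d (\<pi> 1))
                          (slots a b c d (\<pi> 2)) (slots a b c d (\<pi> 3)))"

definition pieceC :: "tensor4 \<Rightarrow> tensor4" where
  "pieceC X a b c d = sym_part X a b c d - piece4 X a b c d"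

definition piece3 :: "real^4^4 \<Rightarrow> tensor4 \<Rightarrow> tensor4" where
  "piece3 g X a b c d = trace2 g (trace1 g X) / 12 * (g$a$c * g$b$d - g$a$d * g$b$c)"

definition traceless_h :: "real^4^4 \<Rightarrow> tensor4 \<Rightarrow> tensor2" where
  "traceless_h g X a b = trace1 g (pieceC X) a b
      - (1/4) * trace2 g (trace1 g (pieceC X)) * g$a$b"

definition piece2 :: "real^4^4 \<Rightarrow> tensor4 \<Rightarrow> tensor4" where
  "piece2 g X = kn g (traceless_h g X)"

definition piece1 :: "real^4^4 \<Rightarrow> tensor4 \<Rightarrow> tensor4" where
  "piece1 g X a b c d = pieceC X a b c d - piece2 g X a b c d - piece3 g X a b c d"

definition piece6 :: "real^4^4 \<Rightarrow> tensor4 \<Rightarrow> tensor4" where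
  "piece6 g X = kn g (trace1 g (antisym_part X))"

definition piece5 :: "real^4^4 \<Rightarrow> tensor4 \<Rightarrow> tensor4" where
  "piece5 g X a b c d = antisym_part X a b c d - piece6 g X a b c d"

end

theory Submission
  imports Defs
begin

lemma ex4: "(x::4) = 0 \<or> x = 1 \<or> x = 2 \<or> x = 3"
proof -
  have "(4::4) = 0" by simp
  then show ?thesis using exhaust_4[of x] by metis
qed

lemma UNIV4: "(UNIV::4 set) = {0,1,2,3}"
  using ex4 by auto

lemma sum4: "sum f (UNIV::4 set) = f 0 + f 1 + f 2 + f 3"
  unfolding UNIV4 by (simp add: ac_simps)

definition Lf :: "(4 \<Rightarrow> 4) \<Rightarrow> real" where
  "Lf f = (if bij f then of_int (sign f) else 0)"

lemma perm4: "bij (f::4\<Rightarrow>4) \<Longrightarrow> permutation f"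
  by (simp add: permutation)

lemma Lf_comp: assumes "bij (s::4\<Rightarrow>4)" shows "Lf (f \<circ> s) = of_int (sign s) * Lf f"
proof (cases "bij f")
  case True
  then show ?thesis using assms by (simp add: Lf_def bij_comp sign_compose perm4)
next
  case False
  have "\<not> bij (f \<circ> s)"
  proof
    assume "bij (f \<circ> s)"
    then have "bij ((f \<circ> s) \<circ> inv s)" using assms bij_comp bij_imp_bij_inv by blast
    moreover have "s \<circ> inv s = id" using assms by (meson bij_is_surj surj_iff)
    then have "(f \<circ> s) \<circ> inv s = f" by (simp add: o_assoc[symmetric])
    ultimately show False using False by simp
  qed
  then show ?thesis using False by (simp add: Lf_def)
qed

lemma lev_Lf: "levi_symbol a b c d = Lf (slots a b c d)"
  by (simp add: levi_symbol_def Lf_def)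

lemma slots_swap01: "slots b a c d = slots a b c d \<circ> Transposition.transpose 0 1"
  by (rule ext, case_tac "x = 0", simp add: slots_def, case_tac "x = 1", simp add: slots_def, case_tac "x = 2", simp add: slots_def, subgoal_tac "x = 3", simp add: slots_def, use ex4 in blast)
lemma slots_swap12: "slots a c b d = slots a b c d \<circ> Transposition.transpose 1 2"
  by (rule ext, case_tac "x = 0", simp add: slots_def, case_tac "x = 1", simp add: slots_def, case_tac "x = 2", simp add: slots_def, subgoal_tac "x = 3", simp add: slots_def, use ex4 in blast)
lemma slots_swap23: "slots a b d c = slots a b c d \<circ> Transposition.transpose 2 3"
  by (rule ext, case_tac "x = 0", simp add: slots_def, case_tac "x = 1", simp add: slots_def, case_tac "x = 2", simp add: slots_def, subgoal_tac "x = 3", simp add: slots_def, use ex4 in blast)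

lemma lev_swap01: "levi_symbol b a c d = - levi_symbol a b c d"
  by (simp add: lev_Lf slots_swap01[where a=a and b=b and c=c and d=d] Lf_comp sign_swap_id bij_swap_iff)
lemma lev_swap12: "levi_symbol a c b d = - levi_symbol a b c d"
  by (simp add: lev_Lf slots_swap12[where a=a and b=b and c=c and d=d] Lf_comp sign_swap_id bij_swap_iff)
lemma lev_swap23: "levi_symbol a b d c = - levi_symbol a b c d"
  by (simp add: lev_Lf slots_swap23[where a=a and b=b and c=c and d=d] Lf_comp sign_swap_id bij_swap_iff)

lemma lev_0123: "levi_symbol 0 1 2 3 = 1"
proof -
  have "slots 0 1 2 3 = id" by (rule ext) (use ex4 in \<open>auto simp: slots_def\<close>)
  then show ?thesis by (simp add: lev_Lf Lf_def sign_id)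
qed

lemma lev_rep:
  "levi_symbol a a c d = 0" "levi_symbol a b b d = 0" "levi_symbol a b c c = 0"
  "levi_symbol a b a d = 0" "levi_symbol a b c b = 0" "levi_symbol a b c a = 0"
proof -
  have ni: "\<And>f::4\<Rightarrow>4. \<And>i j. i \<noteq> j \<Longrightarrow> f i = f j \<Longrightarrow> Lf f = 0"
    by (auto simp: Lf_def bij_def inj_def)
  show "levi_symbol a a c d = 0" by (simp add: lev_Lf, rule ni[of 0 1], auto simp: slots_def)
  show "levi_symbol a b b d = 0" by (simp add: lev_Lf, rule ni[of 1 2], auto simp: slots_def)
  show "levi_symbol a b c c = 0" by (simp add: lev_Lf, rule ni[of 2 3], auto simp: slots_def)
  show "levi_symbol a b a d = 0" by (simp add: lev_Lf, rule ni[of 0 2], auto simp: slots_def)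
  show "levi_symbol a b c b = 0" by (simp add: lev_Lf, rule ni[of 1 3], auto simp: slots_def)
  show "levi_symbol a b c a = 0" by (simp add: lev_Lf, rule ni[of 0 3], auto simp: slots_def)
qed

lemmas lev_simps = lev_swap01[where a=0 and b=1] lev_swap12[where b=0 and c=1] lev_swap23[where c=0 and d=1] lev_swap01[where a=0 and b=2] lev_swap12[where b=0 and c=2] lev_swap23[where c=0 and d=2] lev_swap01[where a=0 and b=3] lev_swap12[where b=0 and c=3] lev_swap23[where c=0 and d=3] lev_swap01[where a=1 and b=2] lev_swap12[where b=1 and c=2] lev_swap23[where c=1 and d=2] lev_swap01[where a=1 and b=3] lev_swap12[where b=1 and c=3] lev_swap23[where c=1 and d=3] lev_swap01[where a=2 and b=3] lev_swap12[where b=2 and c=3] lev_swap23[where c=2 and d=3] lev_rep lev_0123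


lemma Leib4: "det (A::real^4^4) = (\<Sum>i\<in>UNIV. \<Sum>j\<in>UNIV. \<Sum>k\<in>UNIV. \<Sum>l\<in>UNIV.
   levi_symbol i j k l * A$0$i * A$1$j * A$2$k * A$3$l)"
proof -
  have f1: "finite {1::4, 2, 3}" "0 \<notin> {1::4, 2, 3}" by auto
  have f2: "finite {2::4, 3}" "1 \<notin> {2::4, 3}" by auto
  have f3: "finite {3::4}" "2 \<notin> {3::4}" by auto
  show ?thesis
    unfolding det_def UNIV4
    unfolding sum_over_permutations_insert[OF f1]
    unfolding sum_over_permutations_insert[OF f2]
    unfolding sum_over_permutations_insert[OF f3]
    unfolding permutes_sing
    by (simp add: sign_swap_id permutation_swap_id permutation_compose sign_compose sign_id swap_id_eq lev_simps algebra_simps)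
qed

definition dl :: "4 \<Rightarrow> 4 \<Rightarrow> real" where "dl x y = (if x = y then 1 else 0)"

lemma det_mink: "det minkowski = -1"
  by (simp add: Leib4 minkowski_def sum4 lev_simps)

locale lor =
  fixes g :: "real^4^4"
  assumes lor: "lorentzian g"
begin

definition gi where "gi = ginv g"

lemma g_tr: "transpose g = g" using lor unfolding lorentzian_def by blast

lemma g_sym: "g$a$b = g$b$a"
proof -
  have "transpose g $ a $ b = g $ b $ a" by (simp add: transpose_def)
  then show ?thesis using g_tr by simp
qed

lemma detg_neg: "det g < 0"
proof -
  obtain P :: "real^4^4" where "transpose P ** g ** P = minkowski"
    using lor unfolding lorentzian_def by blast
  then have "det (transpose P ** g ** P) = -1" using det_mink by simp
  then have "det P * det g * det P = -1" by (simp add: det_mul)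
  then have "(det P * det P) * det g = -1" by (simp add: algebra_simps)
  moreover have "det P * det P \<ge> 0" by simp
  ultimately show ?thesis
    using mult_nonneg_nonneg[of "det P * det P" "det g"] by linarith
qed

lemma g_inv: "invertible g"
  using detg_neg by (simp add: invertible_det_nz)

lemma ginv_mat: "g ** matrix_inv g = mat 1 \<and> matrix_inv g ** g = mat 1"
  using g_inv unfolding invertible_def matrix_inv_def by (rule someI_ex)

lemma ginv_tr: "transpose (matrix_inv g) = matrix_inv g"
proof -
  let ?h = "matrix_inv g"
  have 1: "g ** transpose ?h = mat 1"
  proof -
    have "transpose (matrix_inv g ** g) = transpose (mat 1 :: real^4^4)" using ginv_mat by simp
    then show ?thesis by (simp add: matrix_transpose_mul g_tr)
  qed
  have "transpose ?h = (?h ** g) ** transpose ?h" using ginv_mat by simp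
  also have "\<dots> = ?h" by (simp add: matrix_mul_assoc[symmetric] 1)
  finally show ?thesis .
qed

lemma gi_sym: "gi a b = gi b a"
proof -
  have "transpose (matrix_inv g) $ a $ b = matrix_inv g $ b $ a" by (simp add: transpose_def)
  then show ?thesis using ginv_tr by (simp add: gi_def ginv_def)
qed

lemma g_gi: "(\<Sum>k\<in>UNIV. g$a$k * gi k b) = dl a b"
proof -
  have "(g ** matrix_inv g)$a$b = mat 1 $a$b" using ginv_mat by simp
  then show ?thesis by (simp add: matrix_matrix_mult_def mat_def gi_def ginv_def dl_def)
qed

lemma gi_g: "(\<Sum>k\<in>UNIV. gi a k * g$k$b) = dl a b"
proof -
  have "(matrix_inv g ** g)$a$b = mat 1 $a$b" using ginv_mat by simp
  then show ?thesis by (simp add: matrix_matrix_mult_def mat_def gi_def ginv_def dl_def)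
qed


lemma ifm:
  "(if P then 1 else 0) * x = (if P then x else (0::real))"
  "x * (if P then 1 else 0) = (if P then x else (0::real))"
  "(if P then x else 0) * y = (if P then x * y else (0::real))"
  "y * (if P then x else 0) = (if P then y * x else (0::real))"
  by auto

lemma sum_if_const: "(\<Sum>x\<in>A. if P then f x else (0::real)) = (if P then (\<Sum>x\<in>A. f x) else 0)"
  by auto

definition rowsM :: "4 \<Rightarrow> 4 \<Rightarrow> 4 \<Rightarrow> 4 \<Rightarrow> real^4^4" where
  "rowsM a b p q = (\<chi> i j. if i = 0 then dl a j else if i = 1 then dl b j else if i = 2 then gi p j else gi q j)"

lemma det_rowsM: "det (rowsM a b p q) = (\<Sum>k\<in>UNIV. \<Sum>l\<in>UNIV. levi_symbol a b k l * gi p k * gi q l)"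
  by (simp add: Leib4 rowsM_def dl_def ifm sum_if_const)

lemma eps_mixed_det: "eps_mixed g a b p q = sqrt (- det g) * det (rowsM a b p q)"
  unfolding det_rowsM eps_mixed_def eps_low_def gi_def[symmetric]
  by (simp add: sum_distrib_left mult_ac gi_sym[of _ p] gi_sym[of _ q])


definition Mx :: "4 \<Rightarrow> 4 \<Rightarrow> 4 \<Rightarrow> 4 \<Rightarrow> 4 \<Rightarrow> 4 \<Rightarrow> 4 \<Rightarrow> 4 \<Rightarrow> real^4^4" where
  "Mx a b c d p q r s = (\<chi> i j.
     if i = 0 then (if j = 0 then g$a$c else if j = 1 then g$a$d else if j = 2 then dl a r else dl a s)
     else if i = 1 then (if j = 0 then g$b$c else if j = 1 then g$b$d else if j = 2 then dl b r else dl b s)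
     else if i = 2 then (if j = 0 then dl p c else if j = 1 then dl p d else if j = 2 then gi p r else gi p s)
     else (if j = 0 then dl q c else if j = 1 then dl q d else if j = 2 then gi q r else gi q s))"

lemma coll1: "(\<Sum>k\<in>UNIV. g$a$k * gi r k) = dl a r"
  using g_gi[of a r] by (simp add: gi_sym[of r])
lemma coll2: "(\<Sum>l\<in>UNIV. gi p l * g$l$c) = dl p c"
  using gi_g by simp
lemma coll3: "(\<Sum>k\<in>UNIV. (\<Sum>l\<in>UNIV. gi p l * g$l$k) * gi r k) = gi p r"
  by (simp add: gi_g dl_def ifm gi_sym[of r p])
lemma coll4: "(\<Sum>k\<in>UNIV. (\<Sum>l\<in>UNIV. gi p l * g$l$k) * dl c k) = dl p c"
  by (simp add: gi_g dl_def ifm)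
lemma coll5: "(\<Sum>k\<in>UNIV. (\<Sum>l\<in>UNIV. dl a l * g$l$k) * gi r k) = dl a r"
  using coll1 by (simp add: dl_def ifm)
lemma coll6: "(\<Sum>k\<in>UNIV. (\<Sum>l\<in>UNIV. dl a l * g$l$k) * dl c k) = g$a$c"
  by (simp add: dl_def ifm)

lemma prodM: "rowsM a b p q ** g ** transpose (rowsM c d r s) = Mx a b c d p q r s"
proof -
  have "(rowsM a b p q ** g ** transpose (rowsM c d r s))$i$j = Mx a b c d p q r s $i$j" for i j
    using ex4[of i] ex4[of j]
    by (auto simp: matrix_matrix_mult_def transpose_def rowsM_def Mx_def coll3 coll4 coll5 coll6)
  then show ?thesis by (simp add: vec_eq_iff)
qed

lemma K: "eps_mixed g a b p q * eps_mixed g c d r s = - det (Mx a b c d p q r s)"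
proof -
  have "det (Mx a b c d p q r s) = det (rowsM a b p q) * det g * det (rowsM c d r s)"
    unfolding prodM[symmetric] by (simp add: det_mul)
  moreover have sq: "sqrt (- det g) * sqrt (- det g) = - det g" using detg_neg by simp
  moreover have "eps_mixed g a b p q * eps_mixed g c d r s =
     (sqrt (- det g) * sqrt (- det g)) * (det (rowsM a b p q) * det (rowsM c d r s))"
    unfolding eps_mixed_det by (simp only: mult_ac)
  ultimately show ?thesis by (simp only: sq) (simp add: mult_ac)
qed


definition KE :: "4 \<Rightarrow> 4 \<Rightarrow> 4 \<Rightarrow> 4 \<Rightarrow> 4 \<Rightarrow> 4 \<Rightarrow> 4 \<Rightarrow> 4 \<Rightarrow> real" where
  "KE a b c d p q r s = - (1/4) * det (Mx a b c d p q r s)"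

definition KR :: "4 \<Rightarrow> 4 \<Rightarrow> 4 \<Rightarrow> 4 \<Rightarrow> 4 \<Rightarrow> 4 \<Rightarrow> 4 \<Rightarrow> 4 \<Rightarrow> real" where
  "KR a b c d p q r s = - (dl p c * dl q d * dl a r * dl b s) + (g$a$c * (dl p d * dl b r * gi q s) - g$a$d * (dl p c * dl b r * gi q s) + g$b$d * (dl p c * dl a r * gi q s) - g$b$c * (dl p d * dl a r * gi q s)) - ((g$a$c * g$b$d - g$a$d * g$b$c)/2) * (gi p r * gi q s)"

lemma anti_eq: "KE a b c d p q r s - KE a b c d q p r s - KE a b c d p q s r + KE a b c d q p s r =
   KR a b c d p q r s - KR a b c d q p r s - KR a b c d p q s r + KR a b c d q p s r"
  unfolding KE_def KR_def Leib4 Mx_def by (simp add: sum4 lev_simps algebra_simps)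

end

definition ctr :: "(4 \<Rightarrow> 4 \<Rightarrow> 4 \<Rightarrow> 4 \<Rightarrow> real) \<Rightarrow> tensor4 \<Rightarrow> real" where
  "ctr K Y = (\<Sum>p\<in>UNIV. \<Sum>q\<in>UNIV. \<Sum>r\<in>UNIV. \<Sum>s\<in>UNIV. K p q r s * Y p q r s)"

lemma ctr_add: "ctr (\<lambda>p q r s. f p q r s + h p q r s) Y = ctr f Y + ctr h Y"
  by (simp add: ctr_def algebra_simps sum.distrib)
lemma ctr_diff: "ctr (\<lambda>p q r s. f p q r s - h p q r s) Y = ctr f Y - ctr h Y"
  by (simp add: ctr_def algebra_simps sum_subtractf)
lemma ctr_scale: "ctr (\<lambda>p q r s. k * f p q r s) Y = k * ctr f Y"
  by (simp add: ctr_def sum_distrib_left mult.assoc)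
lemma ctr_neg: "ctr (\<lambda>p q r s. - f p q r s) Y = - ctr f Y"
  by (simp add: ctr_def sum_negf)
lemma ctr_cong: "(\<And>p q r s. f p q r s = h p q r s) \<Longrightarrow> ctr f Y = ctr h Y"
  by (simp add: ctr_def)

lemma sum_swap34: "(\<Sum>p\<in>A. \<Sum>q\<in>B. \<Sum>r\<in>C. \<Sum>s\<in>D. F p q r s) = (\<Sum>p\<in>A. \<Sum>q\<in>B. \<Sum>s\<in>D. \<Sum>r\<in>C. F p q r s)"
  by (rule sum.cong[OF refl], rule sum.cong[OF refl], rule sum.swap)
lemma sum_swap23: "(\<Sum>p\<in>A. \<Sum>q\<in>B. \<Sum>r\<in>C. F p q r) = (\<Sum>p\<in>A. \<Sum>r\<in>C. \<Sum>q\<in>B. F p q r)"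
  by (rule sum.cong[OF refl], rule sum.swap)

lemma ctr_swap1: assumes "double_form Y"
  shows "ctr (\<lambda>p q r s. f q p r s) Y = - ctr f Y"
proof -
  have "ctr (\<lambda>p q r s. f q p r s) Y = (\<Sum>p\<in>UNIV. \<Sum>q\<in>UNIV. \<Sum>r\<in>UNIV. \<Sum>s\<in>UNIV. f q p r s * Y p q r s)"
    by (simp add: ctr_def)
  also have "\<dots> = (\<Sum>q\<in>UNIV. \<Sum>p\<in>UNIV. \<Sum>r\<in>UNIV. \<Sum>s\<in>UNIV. f q p r s * Y p q r s)"
    by (rule sum.swap)
  also have "\<dots> = (\<Sum>q\<in>UNIV. \<Sum>p\<in>UNIV. \<Sum>r\<in>UNIV. \<Sum>s\<in>UNIV. - (f q p r s * Y q p r s))"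
  proof (intro sum.cong refl)
    fix p q r s
    have "Y p q r s = - Y q p r s" using assms unfolding double_form_def by blast
    then show "f q p r s * Y p q r s = - (f q p r s * Y q p r s)" by simp
  qed
  also have "\<dots> = - ctr f Y" by (simp add: ctr_def sum_negf)
  finally show ?thesis .
qed

lemma ctr_swap2: assumes "double_form Y"
  shows "ctr (\<lambda>p q r s. f p q s r) Y = - ctr f Y"
proof -
  have "ctr (\<lambda>p q r s. f p q s r) Y = (\<Sum>p\<in>UNIV. \<Sum>q\<in>UNIV. \<Sum>r\<in>UNIV. \<Sum>s\<in>UNIV. f p q s r * Y p q r s)"
    by (simp add: ctr_def)
  also have "\<dots> = (\<Sum>p\<in>UNIV. \<Sum>q\<in>UNIV. \<Sum>s\<in>UNIV. \<Sum>r\<in>UNIV. f p q s r * Y p q r s)"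
    by (rule sum_swap34)
  also have "\<dots> = (\<Sum>p\<in>UNIV. \<Sum>q\<in>UNIV. \<Sum>s\<in>UNIV. \<Sum>r\<in>UNIV. - (f p q s r * Y p q s r))"
  proof (intro sum.cong refl)
    fix p q r s
    have "Y p q r s = - Y p q s r" using assms unfolding double_form_def by blast
    then show "f p q s r * Y p q r s = - (f p q s r * Y p q s r)" by simp
  qed
  also have "\<dots> = - ctr f Y" by (simp add: ctr_def sum_negf)
  finally show ?thesis .
qed

lemma ctr_anti: assumes "double_form Y"
  shows "ctr f Y = ctr (\<lambda>p q r s. (f p q r s - f q p r s - f p q s r + f q p s r) / 4) Y"
proof -
  have a: "ctr (\<lambda>p q r s. f q p s r) Y = ctr f Y"
    using ctr_swap1[OF assms, of "\<lambda>p q r s. f p q s r"] ctr_swap2[OF assms, of f] by simp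
  have "ctr (\<lambda>p q r s. (f p q r s - f q p r s - f p q s r + f q p s r) / 4) Y
      = ctr (\<lambda>p q r s. (1/4) * (f p q r s - f q p r s - f p q s r + f q p s r)) Y" by simp
  also have "\<dots> = (1/4) * (ctr f Y - ctr (\<lambda>p q r s. f q p r s) Y - ctr (\<lambda>p q r s. f p q s r) Y + ctr (\<lambda>p q r s. f q p s r) Y)"
    by (simp only: ctr_scale ctr_add ctr_diff)
  also have "\<dots> = ctr f Y"
    using a ctr_swap1[OF assms, of f] ctr_swap2[OF assms, of f] by simp
  finally show ?thesis by simp
qed

context lor begin

lemma kY: "ctr (\<lambda>p q r s. dl p c * dl q d * dl a r * dl b s) Y = Y c d a b"
  by (simp add: ctr_def dl_def ifm sum_if_const)

lemma kT: "ctr (\<lambda>p q r s. dl p x * dl y r * gi q s) Y = trace1 g Y x y"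
  by (simp add: ctr_def trace1_def dl_def ifm sum_if_const gi_def)

lemma kTT: "ctr (\<lambda>p q r s. gi p r * gi q s) Y = trace2 g (trace1 g Y)"
proof -
  have "ctr (\<lambda>p q r s. gi p r * gi q s) Y = (\<Sum>p\<in>UNIV. \<Sum>q\<in>UNIV. \<Sum>r\<in>UNIV. \<Sum>s\<in>UNIV. gi p r * (gi q s * Y p q r s))"
    by (simp add: ctr_def mult.assoc)
  also have "\<dots> = (\<Sum>p\<in>UNIV. \<Sum>r\<in>UNIV. \<Sum>q\<in>UNIV. \<Sum>s\<in>UNIV. gi p r * (gi q s * Y p q r s))"
    by (rule sum_swap23)
  also have "\<dots> = trace2 g (trace1 g Y)"
    by (simp add: trace2_def trace1_def sum_distrib_left gi_def)
  finally show ?thesis .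
qed

lemma RHS_ctr: "- Y c d a b + 2 * kn g (\<lambda>x y. trace1 g Y y x) a b c d
   - trace2 g (trace1 g Y) / 2 * (g$a$c * g$b$d - g$a$d * g$b$c) = ctr (KR a b c d) Y"
  unfolding KR_def
  by (simp only: ctr_add ctr_diff ctr_scale ctr_neg kY kT kTT) (simp add: kn_def field_simps)

lemma DD_ctr: "double_dual g Y a b c d = ctr (KE a b c d) Y"
  unfolding double_dual_def ctr_def KE_def
  by (simp add: K sum_distrib_left algebra_simps)

lemma G: assumes "double_form Y"
  shows "double_dual g Y a b c d = - Y c d a b + 2 * kn g (\<lambda>x y. trace1 g Y y x) a b c d
   - trace2 g (trace1 g Y) / 2 * (g$a$c * g$b$d - g$a$d * g$b$c)"
  unfolding RHS_ctr DD_ctr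
  apply (subst ctr_anti[OF assms])
  apply (subst (2) ctr_anti[OF assms])
  apply (rule ctr_cong)
  using anti_eq by simp

end

definition P4 :: "tensor4 \<Rightarrow> (4 \<Rightarrow> 4) \<Rightarrow> real" where
  "P4 X v = (1/24) * (\<Sum>\<pi>\<in>{\<pi>. \<pi> permutes (UNIV :: 4 set)}.
      of_int (sign \<pi>) * X (v (\<pi> 0)) (v (\<pi> 1)) (v (\<pi> 2)) (v (\<pi> 3)))"

lemma piece4_P4: "piece4 X a b c d = P4 X (slots a b c d)"
  by (simp add: piece4_def P4_def)

lemma P4_comp: assumes t: "t permutes (UNIV::4 set)"
  shows "P4 X (v \<circ> t) = of_int (sign t) * P4 X v"
proof -
  have pt: "permutation t" using t by (simp add: permutes_imp_permutation)
  have "(\<Sum>\<pi>\<in>{\<pi>. \<pi> permutes (UNIV :: 4 set)}. of_int (sign t) * (of_int (sign \<pi>) * X (v (\<pi> 0)) (v (\<pi> 1)) (v (\<pi> 2)) (v (\<pi> 3))))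
     = (\<Sum>\<pi>\<in>{\<pi>. \<pi> permutes (UNIV :: 4 set)}. of_int (sign t) * (of_int (sign (t \<circ> \<pi>)) * X (v ((t \<circ> \<pi>) 0)) (v ((t \<circ> \<pi>) 1)) (v ((t \<circ> \<pi>) 2)) (v ((t \<circ> \<pi>) 3))))"
    by (rule setum_permutations_compose_left[OF t])
  also have "\<dots> = (\<Sum>\<pi>\<in>{\<pi>. \<pi> permutes (UNIV :: 4 set)}. of_int (sign \<pi>) * X ((v \<circ> t) (\<pi> 0)) ((v \<circ> t) (\<pi> 1)) ((v \<circ> t) (\<pi> 2)) ((v \<circ> t) (\<pi> 3)))"
  proof (rule sum.cong[OF refl])
    fix \<pi> assume "\<pi> \<in> {\<pi>. \<pi> permutes (UNIV :: 4 set)}"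
    then have pp: "permutation \<pi>" by (simp add: permutes_imp_permutation)
    have "real_of_int (sign t) * real_of_int (sign (t \<circ> \<pi>)) = real_of_int (sign \<pi>)"
      using pt pp by (simp add: sign_compose mult.assoc[symmetric] flip: of_int_mult)
    then show "of_int (sign t) * (of_int (sign (t \<circ> \<pi>)) * X (v ((t \<circ> \<pi>) 0)) (v ((t \<circ> \<pi>) 1)) (v ((t \<circ> \<pi>) 2)) (v ((t \<circ> \<pi>) 3)))
      = of_int (sign \<pi>) * X ((v \<circ> t) (\<pi> 0)) ((v \<circ> t) (\<pi> 1)) ((v \<circ> t) (\<pi> 2)) ((v \<circ> t) (\<pi> 3))"
      by (simp add: mult.assoc[symmetric])
  qed
  finally have eq: "(\<Sum>\<pi>\<in>{\<pi>. \<pi> permutes (UNIV :: 4 set)}. of_int (sign t) * (of_int (sign \<pi>) * X (v (\<pi> 0)) (v (\<pi> 1)) (v (\<pi> 2)) (v (\<pi> 3))))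
     = (\<Sum>\<pi>\<in>{\<pi>. \<pi> permutes (UNIV :: 4 set)}. of_int (sign \<pi>) * X ((v \<circ> t) (\<pi> 0)) ((v \<circ> t) (\<pi> 1)) ((v \<circ> t) (\<pi> 2)) ((v \<circ> t) (\<pi> 3)))" .
  show ?thesis unfolding P4_def eq[symmetric] sum_distrib_left[symmetric]
    by (simp only: mult_ac)
qed

lemma slots_swap13: "slots a d c b = slots a b c d \<circ> Transposition.transpose 1 3"
  by (rule ext, case_tac "x = 0", simp add: slots_def, case_tac "x = 1", simp add: slots_def, case_tac "x = 2", simp add: slots_def, subgoal_tac "x = 3", simp add: slots_def, use ex4 in blast)
lemma slots_pairswap: "slots c d a b = slots a b c d \<circ> (Transposition.transpose 0 2 \<circ> Transposition.transpose 1 3)"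
  by (rule ext, case_tac "x = 0", simp add: slots_def, case_tac "x = 1", simp add: slots_def, case_tac "x = 2", simp add: slots_def, subgoal_tac "x = 3", simp add: slots_def, use ex4 in blast)

lemma W_01: "piece4 X b a c d = - piece4 X a b c d"
  unfolding piece4_P4 slots_swap01[where a=a and b=b and c=c and d=d]
  by (simp add: P4_comp permutes_swap_id sign_swap_id)
lemma W_23: "piece4 X a b d c = - piece4 X a b c d"
  unfolding piece4_P4 slots_swap23[where a=a and b=b and c=c and d=d]
  by (simp add: P4_comp permutes_swap_id sign_swap_id)
lemma W_13: "piece4 X a d c b = - piece4 X a b c d"
  unfolding piece4_P4 slots_swap13[where a=a and b=b and c=c and d=d]
  by (simp add: P4_comp permutes_swap_id sign_swap_id)
lemma W_T: "piece4 X c d a b = piece4 X a b c d"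
  unfolding piece4_P4 slots_pairswap[where a=a and b=b and c=c and d=d]
  by (simp add: P4_comp permutes_swap_id sign_swap_id permutes_compose sign_compose permutation_swap_id)

context lor begin

lemma gi_g': "(\<Sum>k\<in>UNIV. gi a k * g$b$k) = dl a b"
proof -
  have "(\<Sum>k\<in>UNIV. gi a k * g$b$k) = (\<Sum>k\<in>UNIV. gi a k * g$k$b)"
    by (rule sum.cong[OF refl]) (metis g_sym)
  then show ?thesis using gi_g by simp
qed

lemma coll2': "(\<Sum>b\<in>UNIV. gi b d * g$b$c) = dl d c"
proof -
  have "(\<Sum>b\<in>UNIV. gi b d * g$b$c) = (\<Sum>b\<in>UNIV. gi d b * g$b$c)"
    by (rule sum.cong[OF refl]) (metis gi_sym)
  then show ?thesis using gi_g by simp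
qed

lemma t2: "(\<Sum>b\<in>UNIV. \<Sum>d\<in>UNIV. gi b d * (g$a$d * h b c)) = h a c"
proof -
  have "(\<Sum>b\<in>UNIV. \<Sum>d\<in>UNIV. gi b d * (g$a$d * h b c)) = (\<Sum>b\<in>UNIV. (\<Sum>d\<in>UNIV. g$a$d * gi b d) * h b c)"
    by (simp add: sum_distrib_right sum_distrib_left mult_ac)
  also have "\<dots> = h a c" by (simp add: coll1 dl_def ifm)
  finally show ?thesis .
qed

lemma t3: "(\<Sum>b\<in>UNIV. \<Sum>d\<in>UNIV. gi b d * g$b$d) = 4"
proof -
  have "(\<Sum>b\<in>UNIV. \<Sum>d\<in>UNIV. gi b d * g$b$d) = (\<Sum>b\<in>UNIV. dl b b)"
    by (simp add: gi_g')
  then show ?thesis by (simp add: dl_def)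
qed

lemma t4: "(\<Sum>b\<in>UNIV. \<Sum>d\<in>UNIV. gi b d * (g$b$c * h a d)) = h a c"
proof -
  have "(\<Sum>b\<in>UNIV. \<Sum>d\<in>UNIV. gi b d * (g$b$c * h a d)) = (\<Sum>d\<in>UNIV. \<Sum>b\<in>UNIV. gi b d * (g$b$c * h a d))"
    by (rule sum.swap)
  also have "\<dots> = (\<Sum>d\<in>UNIV. (\<Sum>b\<in>UNIV. gi b d * g$b$c) * h a d)"
    by (simp add: sum_distrib_right sum_distrib_left mult_ac)
  also have "\<dots> = h a c" by (simp add: coll2' dl_def ifm)
  finally show ?thesis .
qed

lemma t1: "(\<Sum>b\<in>UNIV. \<Sum>d\<in>UNIV. gi b d * h b d) = trace2 g h"
  by (simp add: trace2_def gi_def)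

lemma trace1_kn: "trace1 g (kn g h) a c = h a c + (1/2) * trace2 g h * g$a$c"
proof -
  have "trace1 g (kn g h) a c = (1/2) * (g$a$c * (\<Sum>b\<in>UNIV. \<Sum>d\<in>UNIV. gi b d * h b d)
     - (\<Sum>b\<in>UNIV. \<Sum>d\<in>UNIV. gi b d * (g$a$d * h b c))
     + h a c * (\<Sum>b\<in>UNIV. \<Sum>d\<in>UNIV. gi b d * g$b$d)
     - (\<Sum>b\<in>UNIV. \<Sum>d\<in>UNIV. gi b d * (g$b$c * h a d)))"
    by (simp add: trace1_def kn_def gi_def sum_distrib_left sum.distrib sum_subtractf algebra_simps)
  also have "\<dots> = (1/2) * (g$a$c * trace2 g h - h a c + h a c * 4 - h a c)"
    by (simp only: t2 t3 t4, simp only: t1)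
  finally show ?thesis by (simp add: algebra_simps)
qed

lemma trace1_kn_fun: "trace1 g (kn g h) = (\<lambda>a c. h a c + (1/2) * trace2 g h * g$a$c)"
  by (rule ext)+ (rule trace1_kn)

lemma trace2_g: "trace2 g (\<lambda>a c. g$a$c) = 4"
  using t3 t1[of "\<lambda>a c. g$a$c"] by simp

lemma kn_T: "kn g h c d a b = kn g (\<lambda>x y. h y x) a b c d"
  by (simp add: kn_def g_sym[of c a] g_sym[of c b] g_sym[of d a] g_sym[of d b] algebra_simps)

lemma kn_df: "double_form (kn g h)"
  by (simp add: double_form_def kn_def algebra_simps)

lemma trace2_add: "trace2 g (\<lambda>a c. f a c + k a c) = trace2 g f + trace2 g k"
  by (simp add: trace2_def algebra_simps sum.distrib)
lemma trace2_scale: "trace2 g (\<lambda>a c. k * f a c) = k * trace2 g f"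
  by (simp add: trace2_def sum_distrib_left mult_ac)

lemma trace2_kn: "trace2 g (trace1 g (kn g h)) = 3 * trace2 g h"
proof -
  have "trace2 g (trace1 g (kn g h)) = trace2 g (\<lambda>a c. h a c + (1/2) * trace2 g h * g$a$c)"
    by (simp add: trace1_kn_fun)
  also have "\<dots> = trace2 g h + (1/2) * trace2 g h * trace2 g (\<lambda>a c. g$a$c)"
    by (simp only: trace2_add trace2_scale)
  finally show ?thesis by (simp add: trace2_g)
qed

lemma G_kn: "double_dual g (kn g h) a b c d = kn g (\<lambda>x y. h y x) a b c d - (1/2) * trace2 g h * (g$a$c * g$b$d - g$a$d * g$b$c)"
  unfolding G[OF kn_df] trace2_kn kn_T[where h=h and a=a and b=b and c=c and d=d]
  by (simp add: trace1_kn_fun kn_def algebra_simps g_sym[of c a] g_sym[of c b] g_sym[of d a] g_sym[of d b])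


lemma trace1_diff: "trace1 g (\<lambda>a b c d. Y a b c d - Z a b c d) x y = trace1 g Y x y - trace1 g Z x y"
  by (simp add: trace1_def algebra_simps sum_subtractf)
lemma trace1_add: "trace1 g (\<lambda>a b c d. Y a b c d + Z a b c d) x y = trace1 g Y x y + trace1 g Z x y"
  by (simp add: trace1_def algebra_simps sum.distrib)
lemma trace1_scale: "trace1 g (\<lambda>a b c d. k * Y a b c d) x y = k * trace1 g Y x y"
  by (simp add: trace1_def sum_distrib_left mult_ac)

lemma trT: "trace1 g (\<lambda>a b c d. Y c d a b) x y = trace1 g Y y x"
proof -
  have "trace1 g (\<lambda>a b c d. Y c d a b) x y = (\<Sum>b\<in>UNIV. \<Sum>d\<in>UNIV. gi b d * Y y d x b)"
    by (simp add: trace1_def gi_def)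
  also have "\<dots> = (\<Sum>d\<in>UNIV. \<Sum>b\<in>UNIV. gi b d * Y y d x b)" by (rule sum.swap)
  also have "\<dots> = (\<Sum>d\<in>UNIV. \<Sum>b\<in>UNIV. gi d b * Y y d x b)"
    by (intro sum.cong refl) (metis gi_sym)
  also have "\<dots> = trace1 g Y y x" by (simp add: trace1_def gi_def)
  finally show ?thesis .
qed

lemma trace1_zero: assumes "\<And>a b c d. Y a d c b = - Y a b c d"
  shows "trace1 g Y x y = 0"
proof -
  have "trace1 g Y x y = (\<Sum>b\<in>UNIV. \<Sum>d\<in>UNIV. gi b d * Y x b y d)"
    by (simp add: trace1_def gi_def)
  also have "\<dots> = (\<Sum>d\<in>UNIV. \<Sum>b\<in>UNIV. gi b d * Y x b y d)" by (rule sum.swap)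
  also have "\<dots> = (\<Sum>d\<in>UNIV. \<Sum>b\<in>UNIV. - (gi d b * Y x d y b))"
    by (intro sum.cong refl) (metis gi_sym assms mult_minus_right)
  also have "\<dots> = - trace1 g Y x y" by (simp add: trace1_def gi_def sum_negf)
  finally show ?thesis by simp
qed

lemma trace2_T: "trace2 g (\<lambda>a c. h c a) = trace2 g h"
proof -
  have "trace2 g (\<lambda>a c. h c a) = (\<Sum>a\<in>UNIV. \<Sum>c\<in>UNIV. gi a c * h c a)"
    by (simp add: trace2_def gi_def)
  also have "\<dots> = (\<Sum>c\<in>UNIV. \<Sum>a\<in>UNIV. gi a c * h c a)" by (rule sum.swap)
  also have "\<dots> = (\<Sum>c\<in>UNIV. \<Sum>a\<in>UNIV. gi c a * h c a)"
    by (intro sum.cong refl) (metis gi_sym)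
  also have "\<dots> = trace2 g h" by (simp add: trace2_def gi_def)
  finally show ?thesis .
qed

lemma trace2_anti: assumes "\<And>a c. h c a = - h a c" shows "trace2 g h = 0"
proof -
  have e: "(\<lambda>a c. h c a) = (\<lambda>a c. - h a c)" by (intro ext) (rule assms)
  have "trace2 g h = trace2 g (\<lambda>a c. - h a c)" using trace2_T[of h] unfolding e by simp
  also have "\<dots> = - trace2 g h" by (simp add: trace2_def gi_def sum_negf)
  finally show ?thesis by simp
qed

lemma trace2_zero: "trace2 g (\<lambda>a c. 0) = 0" by (simp add: trace2_def)

lemma G_sym: assumes "double_form Z" "\<And>a b c d. Z c d a b = Z a b c d" "\<And>x y. trace1 g Z x y = 0"
  shows "double_dual g Z = (\<lambda>a b c d. - Z a b c d)"
proof (intro ext)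
  fix a b c d
  have t: "trace1 g Z = (\<lambda>x y. 0)" using assms(3) by (intro ext) simp
  show "double_dual g Z a b c d = - Z a b c d"
    unfolding G[OF assms(1)] t trace2_zero using assms(2)[of a b c d] by (simp add: kn_def)
qed

lemma G_asym: assumes "double_form Z" "\<And>a b c d. Z c d a b = - Z a b c d" "\<And>x y. trace1 g Z x y = 0"
  shows "double_dual g Z = Z"
proof (intro ext)
  fix a b c d
  have t: "trace1 g Z = (\<lambda>x y. 0)" using assms(3) by (intro ext) simp
  show "double_dual g Z a b c d = Z a b c d"
    unfolding G[OF assms(1)] t trace2_zero using assms(2)[of a b c d] by (simp add: kn_def)
qed


lemma trace2_diff: "trace2 g (\<lambda>a c. f a c - k a c) = trace2 g f - trace2 g k"
  by (simp add: trace2_def algebra_simps sum_subtractf)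

lemma df_intro: "(\<And>a b c d. Y b a c d = - Y a b c d) \<Longrightarrow> (\<And>a b c d. Y a b d c = - Y a b c d) \<Longrightarrow> double_form Y"
  unfolding double_form_def by (metis minus_minus)
lemma df_D1: "double_form Y \<Longrightarrow> Y b a c d = - Y a b c d"
  unfolding double_form_def by (metis minus_minus)
lemma df_D2: "double_form Y \<Longrightarrow> Y a b d c = - Y a b c d"
  unfolding double_form_def by (metis minus_minus)
lemma df_diff: assumes "double_form Y" "double_form Z" shows "double_form (\<lambda>a b c d. Y a b c d - Z a b c d)"
proof (rule df_intro)
  fix a b c d
  show "Y b a c d - Z b a c d = - (Y a b c d - Z a b c d)"
    using df_D1[OF assms(1), where a=a and b=b and c=c and d=d] df_D1[OF assms(2), where a=a and b=b and c=c and d=d] by simp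
  show "Y a b d c - Z a b d c = - (Y a b c d - Z a b c d)"
    using df_D2[OF assms(1), where a=a and b=b and c=c and d=d] df_D2[OF assms(2), where a=a and b=b and c=c and d=d] by simp
qed

lemma kn_neg: "kn g (\<lambda>x y. - h x y) a b c d = - kn g h a b c d"
  by (simp add: kn_def algebra_simps)

lemma piece3_kn: "piece3 g X = kn g (\<lambda>a c. trace2 g (trace1 g X) / 12 * g$a$c)"
  by (intro ext) (simp add: piece3_def kn_def algebra_simps)

lemma pieceC_fun: "pieceC X = (\<lambda>a b c d. sym_part X a b c d - piece4 X a b c d)"
  by (intro ext) (simp add: pieceC_def)
lemma piece1_fun: "piece1 g X = (\<lambda>a b c d. pieceC X a b c d - piece2 g X a b c d - piece3 g X a b c d)"
  by (intro ext) (simp add: piece1_def)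
lemma piece5_fun: "piece5 g X = (\<lambda>a b c d. antisym_part X a b c d - piece6 g X a b c d)"
  by (intro ext) (simp add: piece5_def)
lemma sym_fun: "sym_part X = (\<lambda>a b c d. (1/2) * (X a b c d + X c d a b))"
  by (intro ext) (simp add: sym_part_def)
lemma asym_fun: "antisym_part X = (\<lambda>a b c d. (1/2) * (X a b c d - X c d a b))"
  by (intro ext) (simp add: antisym_part_def)

lemma dfW: "double_form (piece4 X)"
  by (rule df_intro) (rule W_01, rule W_23)

lemma trW: "trace1 g (piece4 X) x y = 0"
  by (rule trace1_zero) (rule W_13)

lemma trS: "trace1 g (sym_part X) x y = (1/2) * (trace1 g X x y + trace1 g X y x)"
  unfolding sym_fun by (simp only: trace1_scale trace1_add trT[where Y=X])
lemma trA: "trace1 g (antisym_part X) x y = (1/2) * (trace1 g X x y - trace1 g X y x)"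
  unfolding asym_fun by (simp only: trace1_scale trace1_diff trT[where Y=X])

lemma trC: "trace1 g (pieceC X) x y = (1/2) * (trace1 g X x y + trace1 g X y x)"
  unfolding pieceC_fun by (simp only: trace1_diff trS trW diff_zero)

lemma trC_fun: "trace1 g (pieceC X) = (\<lambda>x y. (1/2) * (trace1 g X x y + trace1 g X y x))"
  by (intro ext) (rule trC)

lemma tr2C: "trace2 g (trace1 g (pieceC X)) = trace2 g (trace1 g X)"
  unfolding trC_fun by (simp only: trace2_scale trace2_add trace2_T[of "trace1 g X"]) simp

lemma h_fun: "traceless_h g X = (\<lambda>a b. (1/2) * (trace1 g X a b + trace1 g X b a) - (1/4) * trace2 g (trace1 g X) * g$a$b)"
  by (intro ext) (simp add: traceless_h_def trC tr2C)

lemma h_sym: "(\<lambda>x y. traceless_h g X y x) = traceless_h g X"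
proof (intro ext)
  fix x y
  show "traceless_h g X y x = traceless_h g X x y"
    unfolding h_fun using g_sym[of y x] by (simp add: algebra_simps)
qed

lemma h_tr: "trace2 g (traceless_h g X) = 0"
proof -
  have "trace2 g (traceless_h g X) = trace2 g (\<lambda>a b. (1/2) * (trace1 g X a b + trace1 g X b a)) - trace2 g (\<lambda>a b. ((1/4) * trace2 g (trace1 g X)) * g$a$b)"
    unfolding h_fun by (rule trace2_diff)
  also have "\<dots> = 0"
    by (simp only: trace2_scale trace2_add trace2_T[of "trace1 g X"] trace2_g) simp
  finally show ?thesis .
qed

lemma k_anti: "trace1 g (antisym_part X) y x = - trace1 g (antisym_part X) x y"
  by (simp add: trA algebra_simps)

lemma k_tr: "trace2 g (trace1 g (antisym_part X)) = 0"
  by (rule trace2_anti) (rule k_anti)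

lemma k_T: "(\<lambda>x y. trace1 g (antisym_part X) y x) = (\<lambda>x y. - trace1 g (antisym_part X) x y)"
  by (intro ext) (rule k_anti)

theorem dd2: "double_dual g (piece2 g X) = piece2 g X"
  by (intro ext) (simp add: piece2_def G_kn h_sym h_tr)

theorem dd6: "double_dual g (piece6 g X) = (\<lambda>a b c d. - piece6 g X a b c d)"
  by (intro ext) (simp add: piece6_def G_kn k_T k_tr kn_neg)

theorem dd3: "double_dual g (piece3 g X) = (\<lambda>a b c d. - piece3 g X a b c d)"
proof (intro ext)
  fix a b c d
  let ?t = "trace2 g (trace1 g X)"
  have e: "(\<lambda>x y. ?t / 12 * g$y$x) = (\<lambda>x y. ?t / 12 * g$x$y)" by (intro ext) (metis g_sym)
  have tr: "trace2 g (\<lambda>a c. ?t / 12 * g$a$c) = ?t / 12 * 4"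
    by (simp only: trace2_scale trace2_g)
  show "double_dual g (piece3 g X) a b c d = - piece3 g X a b c d"
    unfolding piece3_kn G_kn e tr by (simp add: kn_def algebra_simps)
qed

theorem dd4: "double_dual g (piece4 X) = (\<lambda>a b c d. - piece4 X a b c d)"
  by (rule G_sym[OF dfW]) (rule W_T, rule trW)


lemma dfS: assumes "double_form X" shows "double_form (sym_part X)"
proof (rule df_intro)
  fix a b c d
  show "sym_part X b a c d = - sym_part X a b c d"
    using df_D1[OF assms, where a=a and b=b and c=c and d=d] df_D2[OF assms, where a=c and b=d and c=a and d=b]
    by (simp add: sym_part_def field_simps)
  show "sym_part X a b d c = - sym_part X a b c d"
    using df_D2[OF assms, where a=a and b=b and c=c and d=d] df_D1[OF assms, where a=c and b=d and c=a and d=b]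
    by (simp add: sym_part_def field_simps)
qed

lemma dfA: assumes "double_form X" shows "double_form (antisym_part X)"
proof (rule df_intro)
  fix a b c d
  show "antisym_part X b a c d = - antisym_part X a b c d"
    using df_D1[OF assms, where a=a and b=b and c=c and d=d] df_D2[OF assms, where a=c and b=d and c=a and d=b]
    by (simp add: antisym_part_def field_simps)
  show "antisym_part X a b d c = - antisym_part X a b c d"
    using df_D2[OF assms, where a=a and b=b and c=c and d=d] df_D1[OF assms, where a=c and b=d and c=a and d=b]
    by (simp add: antisym_part_def field_simps)
qed

lemma kn6_T: "piece6 g X c d a b = - piece6 g X a b c d"
  unfolding piece6_def kn_T[where h="trace1 g (antisym_part X)" and a=a and b=b and c=c and d=d] k_T
  by (rule kn_neg)

theorem dd5: assumes "double_form X" shows "double_dual g (piece5 g X) = piece5 g X"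
proof (rule G_asym)
  show "double_form (piece5 g X)"
    unfolding piece5_fun piece6_def by (rule df_diff[OF dfA[OF assms] kn_df])
  fix a b c d x y
  show "piece5 g X c d a b = - piece5 g X a b c d"
    unfolding piece5_def kn6_T[where a=a and b=b and c=c and d=d] by (simp add: antisym_part_def field_simps)
  show "trace1 g (piece5 g X) x y = 0"
    unfolding piece5_fun trace1_diff piece6_def trace1_kn k_tr by simp
qed

lemma dfC: assumes "double_form X" shows "double_form (pieceC X)"
  unfolding pieceC_fun by (rule df_diff[OF dfS[OF assms] dfW])

theorem dd1: assumes "double_form X" shows "double_dual g (piece1 g X) = (\<lambda>a b c d. - piece1 g X a b c d)"
proof (rule G_sym)
  show "double_form (piece1 g X)"
    unfolding piece1_fun piece2_def piece3_kn by (rule df_diff[OF df_diff[OF dfC[OF assms] kn_df] kn_df])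
  fix a b c d x y
  have C: "pieceC X c d a b = pieceC X a b c d"
    unfolding pieceC_def W_T[where a=a and b=b and c=c and d=d] by (simp add: sym_part_def)
  have P2: "piece2 g X c d a b = piece2 g X a b c d"
    unfolding piece2_def kn_T[where h="traceless_h g X" and a=a and b=b and c=c and d=d] h_sym ..
  have P3: "piece3 g X c d a b = piece3 g X a b c d"
    unfolding piece3_def using g_sym[of c a] g_sym[of d b] g_sym[of c b] g_sym[of d a] by (simp add: algebra_simps)
  show "piece1 g X c d a b = piece1 g X a b c d"
    unfolding piece1_def C P2 P3 ..
  let ?t = "trace2 g (trace1 g X)"
  have tr: "trace2 g (\<lambda>a c. ?t / 12 * g$a$c) = ?t / 12 * 4"
    by (simp only: trace2_scale trace2_g)
  show "trace1 g (piece1 g X) x y = 0"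
    unfolding piece1_fun trace1_diff trC piece2_def piece3_kn trace1_kn h_tr tr
    unfolding h_fun by (simp add: algebra_simps)
qed

end

theorem mainTheorem4:
  fixes g :: "real^4^4" and X :: tensor4
  assumes "lorentzian g" and "double_form X"
  shows "double_dual g (piece1 g X) = (\<lambda>a b c d. - piece1 g X a b c d) \<and>
         double_dual g (piece2 g X) = piece2 g X \<and>
         double_dual g (piece3 g X) = (\<lambda>a b c d. - piece3 g X a b c d) \<and>
         double_dual g (piece4 X) = (\<lambda>a b c d. - piece4 X a b c d) \<and>
         double_dual g (piece5 g X) = piece5 g X \<and>
         double_dual g (piece6 g X) = (\<lambda>a b c d. - piece6 g X a b c d)"
proof -
  interpret lor g by (rule lor.intro) (rule assms(1))
  show ?thesis using dd1[OF assms(2)] dd2 dd3 dd4 dd5[OF assms(2)] dd6 by blast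
qed

end
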